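(* Let $X\subseteq\Omega$ be club in $\Omega$ with $0\notin X$, and let $\xi\in\hat\varepsilon_{\Omega+1}$. Then $\Theta_X(\xi)\notin X'$ if and only if $\xi<\Omega$ and $\xi\in\mathrm{JUMP}(X)$.
   Context: $\Omega$ is the first uncountable ordinal; $\varepsilon_{\Omega+1}$ the least $\varepsilon>\Omega$ with $\omega^\varepsilon=\varepsilon$. Every $0<\xi<\varepsilon_{\Omega+1}$ has a unique $\Omega$-normal form $\xi=\Omega^{\alpha}\beta+\gamma$ with $0<\beta<\Omega$, $\gamma<\Omega^{\alpha}$. $C(0)=\{0\}$, $C(\Omega^\alpha\beta+\gamma)=C(\alpha)\cup C(\gamma)\cup\{\beta\}$; $\xi^*=\max C(\xi)$. For $\theta<\Omega$: $0[\theta]=1[\theta]=0$; $(\Omega^\alpha\beta+\gamma)[\theta]=\Omega^\alpha\beta+\gamma[\theta]$ if $\gamma>0$; $(\Omega^\alpha\beta)[\theta]=\Omega^\alpha\theta$ if $\beta$ is a limit; $\Omega^{\alpha+1}[\theta]=\Omega^\alpha\theta$; $(\Omega^\alpha(\beta+1))[\theta]=\Omega^\alpha\beta+(\Omega^\alpha)[\theta]$ if $\beta>0$; $\Omega^\alpha[\theta]=\Omega^{\alpha[\theta]}$ if $\alpha$ is a limit. $\tau(0)=0$, $\tau(\zeta+1)=1$, $\tau(\Omega^\alpha\beta+\gamma)=\tau(\gamma)$ if $\gamma>0$, $\tau(\Omega^\alpha\beta)=\beta$ if $\beta$ limit, $\tau(\Omega^\alpha(\beta+1))=\tau(\alpha)$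 if $\alpha$ limit, $\tau(\Omega^{\alpha+1}(\beta+1))=\Omega$. $\Theta_X(\xi)$ is the least $\theta\in X$ with $\theta>\xi^*$ such that all $\zeta<\xi$ with $\zeta^*<\theta$ have $\Theta_X(\zeta)<\theta$. $\Omega_0=1$, $\Omega_{n+1}=\Omega^{\Omega_n}$, $\Theta_X(\varepsilon_{\Omega+1})=\sup_n\Theta_X(\Omega_n)$, $\hat\varepsilon_{\Omega+1}=\{\xi<\varepsilon_{\Omega+1}:\xi^*<\Theta_X(\varepsilon_{\Omega+1})\}$; $X'$ is the set of limit points of $X$. $\mathrm{FIX}(X)$ is the set of $\xi<\varepsilon_{\Omega+1}$ with $(\xi[1])^*<\xi^*=\tau(\xi)=\Theta_X(\gamma)$ for some $\gamma>\xi$; $\mathrm{JUMP}(X)=\{0\}\cup\{\text{successor ordinals}\}\cup\mathrm{FIX}(X)$. *)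

theory Defs
  imports Main "HOL-Library.Countable_Set"
begin

text \<open>The countable ordinals (the elements of Omega) are modelled by a type 'c of class
wellorder; the main theorem assumes that 'c is uncountable and that every proper initial
segment of 'c is countable, which characterises the order type omega_1 = Omega.\<close>

definition cz :: "'c::wellorder" where "cz = (LEAST x. True)"
definition csuc :: "'c::wellorder \<Rightarrow> 'c" where "csuc x = (LEAST y. x < y)"
definition c1 :: "'c::wellorder" where "c1 = csuc cz"
definition cpred :: "'c::wellorder \<Rightarrow> 'c" where "cpred b = (THE y. b = csuc y)"
definition climit :: "'c::wellorder \<Rightarrow> bool" where
  "climit b \<longleftrightarrow> b \<noteq> cz \<and> \<not> (\<exists>y. b = csuc y)"
definition csup :: "'c::wellorder set \<Rightarrow> 'c" where
  "csup S = (LEAST y. \<forall>x\<in>S. x \<le> y)"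

definition limpts :: "'c::wellorder set \<Rightarrow> 'c set" where
  "limpts X = {t. cz < t \<and> (\<forall>y<t. \<exists>x\<in>X. y < x \<and> x < t)}"
definition club :: "'c::wellorder set \<Rightarrow> bool" where
  "club X \<longleftrightarrow> (\<forall>y. \<exists>x\<in>X. y < x) \<and> limpts X \<subseteq> X"

text \<open>OP a b g stands for Omega^a * b + g.\<close>
datatype 'c ot = OZ | OP "'c ot" 'c "'c ot"

fun olt :: "'c::wellorder ot \<Rightarrow> 'c ot \<Rightarrow> bool" where
  "olt OZ OZ = False"
| "olt OZ (OP _ _ _) = True"
| "olt (OP _ _ _) OZ = False"
| "olt (OP a b g) (OP a' b' g') = (olt a a' \<or> (a = a' \<and> (b < b' \<or> (b = b' \<and> olt g g'))))"

fun nf :: "'c::wellorder ot \<Rightarrow> bool" where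
  "nf OZ = True"
| "nf (OP a b g) = (nf a \<and> cz < b \<and> nf g \<and> (case g of OZ \<Rightarrow> True | OP a' _ _ \<Rightarrow> olt a' a))"

definition emb :: "'c::wellorder \<Rightarrow> 'c ot" where
  "emb b = (if b = cz then OZ else OP OZ b OZ)"
definition one :: "'c::wellorder ot" where "one = OP OZ c1 OZ"
definition OmegaT :: "'c::wellorder ot" where "OmegaT = OP one c1 OZ"
definition omono :: "'c::wellorder ot \<Rightarrow> 'c \<Rightarrow> 'c ot" where
  "omono a t = (if t = cz then OZ else OP a t OZ)"

fun osuc :: "'c::wellorder ot \<Rightarrow> 'c ot" where
  "osuc OZ = one"
| "osuc (OP a b g) = (if g \<noteq> OZ then OP a b (osuc g)
     else if a = OZ then OP OZ (csuc b) OZ else OP a b one)"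

definition is_succ :: "'c::wellorder ot \<Rightarrow> bool" where
  "is_succ x \<longleftrightarrow> (\<exists>z. nf z \<and> x = osuc z)"
definition opred :: "'c::wellorder ot \<Rightarrow> 'c ot" where
  "opred x = (THE z. nf z \<and> x = osuc z)"
definition olimit :: "'c::wellorder ot \<Rightarrow> bool" where
  "olimit x \<longleftrightarrow> x \<noteq> OZ \<and> \<not> is_succ x"

fun Cset :: "'c::wellorder ot \<Rightarrow> 'c set" where
  "Cset OZ = {cz}"
| "Cset (OP a b g) = Cset a \<union> Cset g \<union> {b}"
definition star :: "'c::wellorder ot \<Rightarrow> 'c" where "star x = Max (Cset x)"

text \<open>Fundamental sequences xi[t] for t < Omega.  In the branch for g = 0 the value
  (Omega^a)[t] is computed inline: 0 if a = 0, Omega^(a-1) t if a is a successor,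
  Omega^(a[t]) if a is a limit.\<close>
fun fs :: "'c::wellorder ot \<Rightarrow> 'c \<Rightarrow> 'c ot" where
  "fs OZ t = OZ"
| "fs (OP a b g) t =
    (if g \<noteq> OZ then OP a b (fs g t)
     else if climit b then omono a t
     else if b = c1 then
       (if a = OZ then OZ else if is_succ a then omono (opred a) t else OP (fs a t) c1 OZ)
     else OP a (cpred b)
       (if a = OZ then OZ else if is_succ a then omono (opred a) t else OP (fs a t) c1 OZ))"

fun tau :: "'c::wellorder ot \<Rightarrow> 'c ot" where
  "tau OZ = OZ"
| "tau (OP a b g) =
    (if is_succ (OP a b g) then one
     else if g \<noteq> OZ then tau g
     else if climit b then emb b
     else if olimit a then tau a
     else OmegaT)"

definition ordrel :: "('c::wellorder ot \<times> 'c ot) set" where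
  "ordrel = {(z, x). nf z \<and> nf x \<and> olt z x}"

definition Theta :: "'c::wellorder set \<Rightarrow> 'c ot \<Rightarrow> 'c" where
  "Theta X = wfrec ordrel (\<lambda>f x. LEAST t. t \<in> X \<and> star x < t \<and>
      (\<forall>z. nf z \<and> olt z x \<and> star z < t \<longrightarrow> f z < t))"

fun OmegaN :: "nat \<Rightarrow> 'c::wellorder ot" where
  "OmegaN 0 = one"
| "OmegaN (Suc n) = OP (OmegaN n) c1 OZ"

definition ThetaEps :: "'c::wellorder set \<Rightarrow> 'c" where
  "ThetaEps X = csup (range (\<lambda>n. Theta X (OmegaN n)))"

definition hat_eps :: "'c::wellorder set \<Rightarrow> 'c ot set" where
  "hat_eps X = {x. nf x \<and> star x < ThetaEps X}"

definition FIX :: "'c::wellorder set \<Rightarrow> 'c ot set" where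
  "FIX X = {x. nf x \<and> star (fs x c1) < star x \<and> tau x = emb (star x)
              \<and> (\<exists>g. nf g \<and> olt x g \<and> Theta X g = star x)}"

definition JUMP :: "'c::wellorder set \<Rightarrow> 'c ot set" where
  "JUMP X = {x. nf x \<and> (x = OZ \<or> is_succ x \<or> x \<in> FIX X)}"

end

theory Submission
  imports Defs
begin

lemma olt_OZ[simp]: "\<not> olt x OZ"
  by (cases x) auto

lemma ordrel_iff: "(z,x) \<in> ordrel \<longleftrightarrow> nf z \<and> nf x \<and> olt z x"
  by (simp add: ordrel_def)

lemma OZ_acc: "OZ \<in> Wellfounded.acc ordrel"
  by (rule accI) (simp add: ordrel_iff)

lemma inner_step:
  fixes a :: "'c::wellorder ot"
  assumes IHa: "\<And>a' b' g'. olt a' a \<Longrightarrow> nf (OP a' b' g') \<Longrightarrow> OP a' b' g' \<in> Wellfounded.acc ordrel"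
    and IHb: "\<And>b' g'. b' < b \<Longrightarrow> nf (OP a b' g') \<Longrightarrow> OP a b' g' \<in> Wellfounded.acc ordrel"
    and gacc: "g \<in> Wellfounded.acc ordrel"
  shows "nf (OP a b g) \<longrightarrow> OP a b g \<in> Wellfounded.acc ordrel"
  using gacc
proof (induction g rule: acc.induct)
  case (accI g)
  show ?case
  proof
    assume nfx: "nf (OP a b g)"
    show "OP a b g \<in> Wellfounded.acc ordrel"
    proof (rule Wellfounded.accI)
      fix y assume yr: "(y, OP a b g) \<in> ordrel"
      hence ny: "nf y" and ly: "olt y (OP a b g)" unfolding ordrel_iff by auto
      show "y \<in> Wellfounded.acc ordrel"
      proof (cases y)
        case OZ thus ?thesis using OZ_acc by simp
      next
        case (OP a' b' g')
        have cs: "olt a' a \<or> (a' = a \<and> (b' < b \<or> (b' = b \<and> olt g' g)))" using ly OP by simp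
        have nfy: "nf (OP a' b' g')" using ny OP by simp
        show ?thesis
        proof (cases "olt a' a")
          case True thus ?thesis using IHa[OF True nfy] OP by simp
        next
          case False
          hence ae: "a' = a" and bb: "b' < b \<or> (b' = b \<and> olt g' g)" using cs by auto
          show ?thesis
          proof (cases "b' < b")
            case True
            thus ?thesis using IHb[OF True] nfy ae OP by simp
          next
            case False
            hence be: "b' = b" and gg: "olt g' g" using bb by auto
            have "(g', g) \<in> ordrel" using gg nfy nfx unfolding ordrel_iff by simp
            hence "nf (OP a b g') \<longrightarrow> OP a b g' \<in> Wellfounded.acc ordrel" by (rule accI.IH)
            thus ?thesis using nfy ae be OP by simp
          qed
        qed
      qed
    qed
  qed
qed

lemma acc_OP2:
  fixes a :: "'c::wellorder ot"
  assumes IHa: "\<And>a' b' g'. olt a' a \<Longrightarrow> nf (OP a' b' g') \<Longrightarrow> OP a' b' g' \<in> Wellfounded.acc ordrel"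
  shows "nf (OP a b g) \<Longrightarrow> OP a b g \<in> Wellfounded.acc ordrel"
proof (induction b arbitrary: g rule: less_induct)
  case (less b)
  have gacc: "g \<in> Wellfounded.acc ordrel"
  proof (cases g)
    case OZ thus ?thesis using OZ_acc by simp
  next
    case (OP a1 b1 g1)
    have h: "olt a1 a" "nf (OP a1 b1 g1)" using less.prems OP by auto
    show ?thesis using IHa[OF h] OP by simp
  qed
  have "nf (OP a b g) \<longrightarrow> OP a b g \<in> Wellfounded.acc ordrel"
    by (rule inner_step[OF IHa less.IH gacc])
  thus ?case using less.prems by simp
qed

lemma acc_OP:
  fixes a :: "'c::wellorder ot"
  assumes "a \<in> Wellfounded.acc ordrel"
  shows "nf (OP a b g) \<Longrightarrow> OP a b g \<in> Wellfounded.acc ordrel"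
  using assms
proof (induction a arbitrary: b g rule: acc.induct)
  case (accI a)
  have IHa: "OP a' b' g' \<in> Wellfounded.acc ordrel" if "olt a' a" "nf (OP a' b' g')" for a' b' g'
  proof -
    have "(a', a) \<in> ordrel" using that accI.prems unfolding ordrel_iff by simp
    thus ?thesis using that(2) by (rule accI.IH)
  qed
  show ?case by (rule acc_OP2[OF IHa accI.prems])
qed

lemma nf_acc: "nf x \<Longrightarrow> (x::'c::wellorder ot) \<in> Wellfounded.acc ordrel"
proof (induction x)
  case OZ thus ?case using OZ_acc by simp
next
  case (OP a b g)
  hence ha: "a \<in> Wellfounded.acc ordrel" by simp
  show ?case using acc_OP[OF ha OP.prems] .
qed

lemma wf_ordrel: "wf (ordrel :: ('c::wellorder ot \<times> 'c ot) set)"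
proof (rule acc_wfI, intro allI)
  fix x :: "'c ot"
  show "x \<in> Wellfounded.acc ordrel"
  proof (cases "nf x")
    case True thus ?thesis by (rule nf_acc)
  next
    case False
    show ?thesis
    proof (rule accI)
      fix y assume "(y, x) \<in> ordrel"
      with False show "y \<in> Wellfounded.acc ordrel" by (simp add: ordrel_iff)
    qed
  qed
qed

lemma Theta_unf: "Theta X \<xi> = (\<lambda>f x. LEAST t. t \<in> X \<and> star x < t \<and>
      (\<forall>z. nf z \<and> olt z x \<and> star z < t \<longrightarrow> f z < t)) (cut (Theta X) ordrel \<xi>) \<xi>"
  unfolding Theta_def by (rule wfrec[OF wf_ordrel])

lemma Theta_eq: "nf \<xi> \<Longrightarrow> Theta X \<xi> = (LEAST t. t \<in> X \<and> star \<xi> < t \<and>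
      (\<forall>z. nf z \<and> olt z \<xi> \<and> star z < t \<longrightarrow> Theta X z < t))"
  apply (subst Theta_unf)
  apply (rule arg_cong[where f=Least])
  apply (rule ext)
  apply (rule conj_cong[OF refl])
  apply (rule conj_cong[OF refl])
  apply (rule all_cong)
  apply (auto simp: cut_def ordrel_iff)
  done


instance ot :: (countable) countable by countable_datatype

lemma cz_le: "cz \<le> (x::'c::wellorder)"
  unfolding cz_def by (rule Least_le) simp

lemma csuc_le: "(x::'c::wellorder) < y \<Longrightarrow> csuc x \<le> y"
  unfolding csuc_def by (rule Least_le)

lemma finite_Cset: "finite (Cset x)"
  by (induction x) auto

lemma cz_Cset: "cz \<in> Cset x"
  by (induction x) auto

lemma star_ge: "c \<in> Cset x \<Longrightarrow> c \<le> star x"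
  unfolding star_def by (rule Max_ge[OF finite_Cset])

lemma star_less_iff: "star x < t \<longleftrightarrow> (\<forall>c\<in>Cset x. c < t)"
  unfolding star_def using finite_Cset cz_Cset by (subst Max_less_iff) auto

lemma set_ot_Cset: "set_ot x \<subseteq> Cset x"
  by (induction x) auto

lemma star_OZ[simp]: "star OZ = cz"
  by (simp add: star_def)

lemma star_emb[simp]: "star (emb b) = b"
  unfolding emb_def star_def using cz_le[of b]
  by (auto simp: max_def)

lemma nf_emb[simp]: "nf (emb b)"
  unfolding emb_def using cz_le[of b] by (auto simp: le_less)

lemma emb_cz[simp]: "emb cz = OZ"
  by (simp add: emb_def)

lemma emb_ne: "b \<noteq> cz \<Longrightarrow> emb b = OP OZ b OZ"
  by (simp add: emb_def)

lemma emb_lt: "d < b \<Longrightarrow> olt (emb d) (emb b)"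
  using cz_le[of d] unfolding emb_def by auto

lemma lt_emb: "nf z \<Longrightarrow> olt z (emb b) \<Longrightarrow> \<exists>d<b. z = emb d"
proof (cases "b = cz")
  case True thus "nf z \<Longrightarrow> olt z (emb b) \<Longrightarrow> \<exists>d<b. z = emb d" by simp
next
  case False
  assume nz: "nf z" and lz: "olt z (emb b)"
  show ?thesis
  proof (cases z)
    case OZ thus ?thesis using False cz_le[of b] by (intro exI[of _ cz]) (auto simp: le_less)
  next
    case (OP a' b' g')
    with lz False have "a' = OZ" "b' < b" by (auto simp: emb_def)
    moreover have "g' = OZ" using nz OP \<open>a' = OZ\<close> by (cases g') auto
    moreover have "b' \<noteq> cz" using nz OP by auto
    ultimately show ?thesis using OP by (auto simp: emb_def)
  qed
qed

lemma emb_trans: "d < b \<Longrightarrow> olt (emb b) g \<Longrightarrow> olt (emb d) g"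
  using cz_le[of d] unfolding emb_def by (cases g) (auto split: if_splits)

lemma emb_trich: "nf g \<Longrightarrow> olt g (emb b) \<or> g = emb b \<or> olt (emb b) g"
proof (cases g)
  case OZ thus "nf g \<Longrightarrow> ?thesis" by (cases "b = cz") (auto simp: emb_def)
next
  case (OP a' b' g')
  assume ng: "nf g"
  show ?thesis
  proof (cases "a' = OZ")
    case True
    hence "g' = OZ" using ng OP by (cases g') auto
    thus ?thesis using True OP ng by (cases "b = cz") (auto simp: emb_def neq_iff)
  next
    case False
    hence "olt OZ a'" by (cases a') auto
    thus ?thesis using OP by (cases "b = cz") (auto simp: emb_def)
  qed
qed

lemma small_emb: "nf \<xi> \<Longrightarrow> olt \<xi> OmegaT \<Longrightarrow> \<exists>b. \<xi> = emb b"
proof (cases \<xi>)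
  case OZ thus ?thesis by (intro exI[of _ cz]) simp
next
  case (OP a b g)
  assume n: "nf \<xi>" and l: "olt \<xi> OmegaT"
  have bc: "cz < b" using n OP by simp
  have "\<not> b < c1"
  proof
    assume "b < c1"
    moreover have "c1 \<le> b" unfolding c1_def using bc by (rule csuc_le)
    ultimately show False by simp
  qed
  hence "olt a one" using l OP by (auto simp: OmegaT_def)
  moreover have "nf a" using n OP by simp
  ultimately have "a = OZ"
  proof (cases a)
    case (OP a1 b1 g1)
    assume "olt a one" "nf a"
    hence "b1 < c1" using OP by (auto simp: one_def)
    moreover have "c1 \<le> b1" unfolding c1_def using \<open>nf a\<close> OP by (intro csuc_le) simp
    ultimately show ?thesis by simp
  qed simp
  moreover have "g = OZ" using n OP \<open>a = OZ\<close> by (cases g) auto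
  ultimately show ?thesis using OP bc by (intro exI[of _ b]) (simp add: emb_def)
qed

lemma emb_small: "olt (emb b) OmegaT"
  by (auto simp: emb_def OmegaT_def one_def)

lemma big_gt: "nf \<xi> \<Longrightarrow> \<not> olt \<xi> OmegaT \<Longrightarrow> olt (emb y) \<xi>"
proof (cases \<xi>)
  case OZ thus "\<not> olt \<xi> OmegaT \<Longrightarrow> ?thesis" by (simp add: OmegaT_def)
next
  case (OP a b g)
  assume n: "nf \<xi>" and l: "\<not> olt \<xi> OmegaT"
  show ?thesis
  proof (cases "a = OZ")
    case True
    hence "g = OZ" using n OP by (cases g) auto
    thus ?thesis using l OP True by (simp add: OmegaT_def one_def)
  next
    case False
    hence "olt OZ a" by (cases a) auto
    thus ?thesis using OP by (simp add: emb_def)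
  qed
qed

lemma Cset_OmegaN: "Cset (OmegaN n) = {cz, c1}"
  by (induction n) (auto simp: one_def)

lemma nf_OmegaN: "(cz::'c::wellorder) < c1 \<Longrightarrow> nf (OmegaN n :: 'c ot)"
  by (induction n) (auto simp: one_def)

lemma star_OmegaN: "(cz::'c::wellorder) < c1 \<Longrightarrow> star (OmegaN n :: 'c ot) = c1"
  unfolding star_def Cset_OmegaN by (auto simp: max_def dest: less_imp_le)

lemma osuc_ne: "osuc z \<noteq> OZ"
  by (cases z) (auto simp: one_def)

lemma not_succ_emb: "climit b \<Longrightarrow> \<not> is_succ (emb b)"
proof
  assume lb: "climit b" and s: "is_succ (emb b)"
  then obtain z where e: "emb b = osuc z" unfolding is_succ_def by blast
  have e2: "OP OZ b OZ = osuc z" using e lb by (simp add: emb_def climit_def)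
  show False
  proof (cases z)
    case OZ
    hence "b = csuc cz" using e2 by (simp add: one_def c1_def)
    thus False using lb unfolding climit_def by blast
  next
    case (OP a b' g)
    thus False using e2 lb osuc_ne[of g] by (auto simp: one_def climit_def split: if_splits)
  qed
qed

lemma succ_emb: "csuc y \<noteq> cz \<Longrightarrow> is_succ (emb (csuc y))"
  unfolding is_succ_def
proof (intro exI[of _ "emb y"] conjI)
  assume "csuc y \<noteq> cz"
  show "nf (emb y)" by simp
  show "emb (csuc y) = osuc (emb y)"
    using \<open>csuc y \<noteq> cz\<close> by (cases "y = cz") (auto simp: emb_def one_def c1_def)
qed


locale thx =
  fixes X :: "'c::wellorder set"
  assumes unc: "\<not> countable (UNIV :: 'c set)"
    and seg: "\<forall>x::'c. countable {y. y < x}"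
    and clubX: "club X" and czX: "cz \<notin> X"
begin

lemma bound:
  assumes "countable (S::'c set)"
  shows "\<exists>u. \<forall>x\<in>S. x < u"
proof (rule ccontr)
  assume "\<not> ?thesis"
  hence h: "\<forall>u. \<exists>x\<in>S. u \<le> x" by (auto simp: not_less)
  have "UNIV \<subseteq> (\<Union>x\<in>S. insert x {y. y < x})"
  proof
    fix u :: 'c
    from h obtain x where "x \<in> S" "u \<le> x" by blast
    thus "u \<in> (\<Union>x\<in>S. insert x {y. y < x})" by (auto simp: le_less)
  qed
  moreover have "countable (\<Union>x\<in>S. insert x {y. y < x})"
    using assms seg by (intro countable_UN) auto
  ultimately show False using unc countable_subset by blast
qed

lemma nomax: "\<exists>y. (x::'c) < y"
  using bound[of "{x}"] by auto

lemma csuc_gt: "(x::'c) < csuc x"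
  unfolding csuc_def by (rule LeastI_ex) (rule nomax)

lemma cz_c1: "(cz::'c) < c1"
  unfolding c1_def by (rule csuc_gt)

lemma limit_csuc: "climit (b::'c) \<Longrightarrow> d < b \<Longrightarrow> csuc d < b"
  using csuc_le[of d b] unfolding climit_def by (auto simp: le_less)

lemma limit_cz: "climit (b::'c) \<Longrightarrow> cz < b"
  using cz_le[of b] unfolding climit_def by (auto simp: le_less)

lemma limit_c1: "climit (b::'c) \<Longrightarrow> c1 < b"
  unfolding c1_def using limit_csuc limit_cz by blast

lemma unbounded: "\<exists>x\<in>X. y < x"
  using clubX unfolding club_def by auto

lemma closed: "t \<in> limpts X \<Longrightarrow> t \<in> X"
  using clubX unfolding club_def by auto

lemma countable_small: "countable {z::'c ot. star z < s}"
proof -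
  let ?S = "{y::'c. y < s}"
  have cS: "countable ?S" using seg by auto
  define f where "f = to_nat_on ?S"
  have inj: "inj_on f ?S" unfolding f_def using cS by (rule inj_on_to_nat_on)
  have sub: "{z. star z < s} \<subseteq> {z. set_ot z \<subseteq> ?S}"
    using set_ot_Cset by (fastforce simp: star_less_iff)
  have "inj_on (map_ot f) {z. set_ot z \<subseteq> ?S}"
  proof (rule inj_onI)
    fix x y assume hx: "x \<in> {z. set_ot z \<subseteq> ?S}" and hy: "y \<in> {z. set_ot z \<subseteq> ?S}"
      and eq: "map_ot f x = map_ot f y"
    show "x = y"
    proof (rule ot.inj_map_strong[OF _ eq])
      fix p q assume "p \<in> set_ot x" "q \<in> set_ot y" "f p = f q"
      thus "p = q" using inj hx hy by (auto dest: inj_onD)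
    qed
  qed
  hence "countable {z. set_ot z \<subseteq> ?S}" by (rule countable_image_inj_on[rotated]) simp
  thus ?thesis using sub by (rule countable_subset[rotated])
qed

lemma closure_exists: "\<exists>t. t \<in> X \<and> s < t \<and> (\<forall>z. star z < t \<longrightarrow> (f::'c ot \<Rightarrow> 'c) z < t)"
proof -
  have step: "\<exists>x. x \<in> X \<and> r < x \<and> (\<forall>z. star z < r \<longrightarrow> f z < x)" for r
  proof -
    have "countable (insert r (f ` {z. star z < r}))" using countable_small by simp
    then obtain u where u: "\<forall>x\<in>insert r (f ` {z. star z < r}). x < u" using bound by blast
    obtain x where "x \<in> X" "u < x" using unbounded by blast
    thus ?thesis using u by (intro exI[of _ x]) (auto intro: less_trans)
  qed
  hence "\<exists>g. \<forall>r. g r \<in> X \<and> r < g r \<and> (\<forall>z. star z < r \<longrightarrow> f z < g r)" by (intro choice) blast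
  then obtain g where g: "\<And>r. g r \<in> X \<and> r < g r \<and> (\<forall>z. star z < r \<longrightarrow> f z < g r)" by blast
  define sq where "sq n = (g ^^ Suc n) s" for n
  have sq0: "sq 0 = g s" by (simp add: sq_def)
  have sqS: "sq (Suc n) = g (sq n)" for n by (simp add: sq_def)
  have "countable (range sq)" by simp
  then obtain u where "\<forall>x\<in>range sq. x < u" using bound by blast
  hence ex: "\<exists>u. \<forall>n. sq n < u" by auto
  define t where "t = (LEAST u. \<forall>n. sq n < u)"
  have tub: "\<forall>n. sq n < t" unfolding t_def using ex by (rule LeastI_ex)
  have below: "\<exists>n. y \<le> sq n" if "y < t" for y
  proof -
    have "\<not> (\<forall>n. sq n < y)" using that unfolding t_def by (rule not_less_Least)
    thus ?thesis by (auto simp: not_less)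
  qed
  have sq_gt: "s < sq 0" using g sq0 by simp
  have sinc: "sq n < sq (Suc n)" "sq (Suc n) \<in> X" for n using g[of "sq n"] sqS by auto
  have "t \<in> limpts X"
    unfolding limpts_def
  proof (intro CollectI conjI allI impI)
    show "cz < t" using cz_le[of s] sq_gt tub by (meson le_less_trans less_trans)
    fix y assume "y < t"
    then obtain n where n: "y \<le> sq n" using below by blast
    show "\<exists>x\<in>X. y < x \<and> x < t"
      using n sinc[of n] tub by (intro bexI[of _ "sq (Suc n)"]) (auto intro: le_less_trans)
  qed
  hence tX: "t \<in> X" using closed by blast
  show ?thesis
  proof (intro exI[of _ t] conjI allI impI)
    show "t \<in> X" by (rule tX)
    show "s < t" using sq_gt tub by (meson less_trans)
    fix z assume "star z < t"
    then obtain n where "star z \<le> sq n" using below by blast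
    hence "star z < sq (Suc n)" using sinc[of n] by (metis le_less_trans)
    hence "f z < g (sq (Suc n))" using g by blast
    hence "f z < sq (Suc (Suc n))" using sqS by simp
    thus "f z < t" using tub less_trans by blast
  qed
qed

lemma Theta_spec:
  assumes "nf \<xi>"
  shows "Theta X \<xi> \<in> X \<and> star \<xi> < Theta X \<xi> \<and>
    (\<forall>z. nf z \<and> olt z \<xi> \<and> star z < Theta X \<xi> \<longrightarrow> Theta X z < Theta X \<xi>)"
proof -
  obtain t where "t \<in> X \<and> star \<xi> < t \<and> (\<forall>z. star z < t \<longrightarrow> Theta X z < t)"
    using closure_exists by blast
  hence "\<exists>t. t \<in> X \<and> star \<xi> < t \<and> (\<forall>z. nf z \<and> olt z \<xi> \<and> star z < t \<longrightarrow> Theta X z < t)"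
    by blast
  thus ?thesis unfolding Theta_eq[OF assms] by (rule LeastI_ex)
qed

lemma Theta_X: "nf \<xi> \<Longrightarrow> Theta X \<xi> \<in> X"
  using Theta_spec by blast

lemma Theta_star: "nf \<xi> \<Longrightarrow> star \<xi> < Theta X \<xi>"
  using Theta_spec by blast

lemma Theta_lt: "nf \<xi> \<Longrightarrow> nf z \<Longrightarrow> olt z \<xi> \<Longrightarrow> star z < Theta X \<xi> \<Longrightarrow> Theta X z < Theta X \<xi>"
  using Theta_spec by blast

lemma Theta_min:
  assumes "nf \<xi>" "t \<in> X" "star \<xi> < t"
    "\<And>z. nf z \<Longrightarrow> olt z \<xi> \<Longrightarrow> star z < t \<Longrightarrow> Theta X z < t"
  shows "Theta X \<xi> \<le> t"
  unfolding Theta_eq[OF assms(1)] by (rule Least_le) (use assms in blast)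

lemma Theta_mono: "d < b \<Longrightarrow> Theta X (emb d) < Theta X (emb b)"
proof -
  assume "d < b"
  moreover have "b < Theta X (emb b)" using Theta_star[of "emb b"] by simp
  ultimately show ?thesis using Theta_lt[of "emb b" "emb d"] emb_lt[of d b] by simp
qed

lemma zero_case: "Theta X OZ \<notin> limpts X"
proof
  assume "Theta X OZ \<in> limpts X"
  moreover have "cz < Theta X OZ" using Theta_star[of OZ] by simp
  ultimately obtain x where x: "x \<in> X" "cz < x" "x < Theta X OZ" unfolding limpts_def by blast
  have "Theta X OZ \<le> x" by (rule Theta_min) (use x in auto)
  thus False using x by simp
qed

lemma succ_case: "Theta X (emb (csuc y)) \<notin> limpts X"
proof
  let ?b = "csuc y"
  assume "Theta X (emb ?b) \<in> limpts X"
  moreover have lt: "Theta X (emb y) < Theta X (emb ?b)" using Theta_mono csuc_gt by blast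
  ultimately obtain x where x: "x \<in> X" "Theta X (emb y) < x" "x < Theta X (emb ?b)"
    unfolding limpts_def by blast
  have "Theta X (emb ?b) \<le> x"
  proof (rule Theta_min)
    show "nf (emb ?b)" by simp
    show "x \<in> X" by fact
    have "y < Theta X (emb y)" using Theta_star[of "emb y"] by simp
    hence "?b \<le> Theta X (emb y)" by (rule csuc_le)
    thus "star (emb ?b) < x" using x by simp
    fix z assume "nf z" "olt z (emb ?b)" "star z < x"
    then obtain d where d: "d < ?b" "z = emb d" using lt_emb by blast
    have "d \<le> y" using d(1) csuc_le[of y d] by (auto simp: not_le[symmetric])
    hence "Theta X (emb d) \<le> Theta X (emb y)" using Theta_mono by (auto simp: le_less)
    thus "Theta X z < x" using d x by simp
  qed
  thus False using x by simp
qed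

lemma limit_small:
  assumes lb: "climit b" and sm: "\<forall>d<b. Theta X (emb d) < b"
  shows "Theta X (emb b) \<notin> limpts X"
proof
  assume "Theta X (emb b) \<in> limpts X"
  moreover have "b < Theta X (emb b)" using Theta_star[of "emb b"] by simp
  ultimately obtain x where x: "x \<in> X" "b < x" "x < Theta X (emb b)" unfolding limpts_def by blast
  have "Theta X (emb b) \<le> x"
  proof (rule Theta_min)
    show "nf (emb b)" "x \<in> X" "star (emb b) < x" using x by auto
    fix z assume "nf z" "olt z (emb b)" "star z < x"
    then obtain d where d: "d < b" "z = emb d" using lt_emb by blast
    thus "Theta X z < x" using sm x(2) by (metis less_trans)
  qed
  thus False using x by simp
qed

lemma limit_big:
  assumes lb: "climit b" and nl: "Theta X (emb b) \<notin> limpts X"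
  shows "\<forall>d<b. Theta X (emb d) < b"
proof (rule ccontr)
  assume "\<not> ?thesis"
  then obtain d0 where d0: "d0 < b" "b \<le> Theta X (emb d0)" by (auto simp: not_less)
  let ?T = "Theta X (emb b)"
  have bT: "b < ?T" using Theta_star[of "emb b"] by simp
  have czb: "cz < b" using lb by (rule limit_cz)
  have "cz < ?T" using czb bT by (rule less_trans)
  with nl obtain y where y: "y < ?T" "\<forall>x\<in>X. y < x \<longrightarrow> \<not> x < ?T" unfolding limpts_def by auto
  define P where "P w \<longleftrightarrow> w < ?T \<and> (\<forall>x\<in>X. w < x \<longrightarrow> \<not> x < ?T)" for w
  define y' where "y' = (LEAST w. P w)"
  have Py': "P y'" unfolding y'_def using y by (intro LeastI[of P y]) (simp add: P_def)
  have lowT: "Theta X (emb d) \<le> y'" if "d < b" for d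
  proof -
    have "Theta X (emb d) \<in> X" by (rule Theta_X) simp
    moreover have "Theta X (emb d) < ?T" using Theta_mono that by blast
    ultimately show ?thesis using Py' unfolding P_def by (auto simp: not_less[symmetric])
  qed
  have y'X: "y' \<in> X"
  proof (rule ccontr)
    assume ny: "y' \<notin> X"
    have "y' \<in> limpts X" unfolding limpts_def
    proof (intro CollectI conjI allI impI)
      have "cz < Theta X (emb cz)" using Theta_star[of "emb cz"] by simp
      thus "cz < y'" using lowT[OF czb] by simp
      fix w assume wy: "w < y'"
      hence "\<not> P w" unfolding y'_def by (rule not_less_Least)
      moreover have "w < ?T" using wy Py' unfolding P_def by (auto intro: less_trans)
      ultimately obtain x where x: "x \<in> X" "w < x" "x < ?T" unfolding P_def by auto
      moreover have "\<not> y' < x" using Py' x unfolding P_def by auto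
      moreover have "x \<noteq> y'" using x ny by auto
      ultimately show "\<exists>x\<in>X. w < x \<and> x < y'" by (auto simp: not_less le_less)
    qed
    thus False using closed ny by blast
  qed
  have mono2: "Theta X (emb d) < y'" if "d < b" for d
  proof -
    have "csuc d < b" using limit_csuc[OF lb that] .
    hence "Theta X (emb (csuc d)) \<le> y'" by (rule lowT)
    moreover have "Theta X (emb d) < Theta X (emb (csuc d))" using Theta_mono csuc_gt by blast
    ultimately show ?thesis by simp
  qed
  have by': "b < y'" using d0 mono2[OF d0(1)] by simp
  have "?T \<le> y'"
  proof (rule Theta_min)
    show "nf (emb b)" "y' \<in> X" "star (emb b) < y'" using y'X by' by auto
    fix z assume "nf z" "olt z (emb b)" "star z < y'"
    then obtain d where "d < b" "z = emb d" using lt_emb by blast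
    thus "Theta X z < y'" using mono2 by simp
  qed
  thus False using Py' unfolding P_def by (meson leD)
qed

lemma fix_exists:
  assumes lb: "climit b" and sm: "\<forall>d<b. Theta X (emb d) < b" and eps: "b < ThetaEps X"
  shows "\<exists>g. nf g \<and> olt (emb b) g \<and> Theta X g = b"
proof -
  have czb: "cz < b" using lb by (rule limit_cz)
  have bX: "b \<in> X"
  proof (rule closed)
    show "b \<in> limpts X" unfolding limpts_def
    proof (intro CollectI conjI allI impI)
      show "cz < b" by fact
      fix y assume yb: "y < b"
      have "y < Theta X (emb y)" using Theta_star[of "emb y"] by simp
      thus "\<exists>x\<in>X. y < x \<and> x < b" using sm yb Theta_X[of "emb y"] by auto
    qed
  qed
  have "\<exists>n. b < Theta X (OmegaN n)"
  proof (rule ccontr)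
    assume "\<not> ?thesis"
    hence "\<forall>x\<in>range (\<lambda>n. Theta X (OmegaN n)). x \<le> b" by (auto simp: not_less)
    hence "ThetaEps X \<le> b" unfolding ThetaEps_def csup_def by (rule Least_le)
    thus False using eps by simp
  qed
  then obtain n where n: "b < Theta X (OmegaN n)" by blast
  define G where "G = {g. nf g \<and> star g < b \<and> b \<le> Theta X g}"
  have "OmegaN n \<in> G" unfolding G_def
    using n nf_OmegaN[OF cz_c1] star_OmegaN[OF cz_c1] limit_c1[OF lb] by auto
  then obtain \<gamma> where \<gamma>G: "\<gamma> \<in> G" and \<gamma>min: "\<And>y. (y, \<gamma>) \<in> ordrel \<Longrightarrow> y \<notin> G"
    using wfE_min[OF wf_ordrel] by metis
  have n\<gamma>: "nf \<gamma>" "star \<gamma> < b" "b \<le> Theta X \<gamma>" using \<gamma>G G_def by auto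
  have "olt (emb b) \<gamma>"
  proof -
    have "\<not> olt \<gamma> (emb b)"
    proof
      assume "olt \<gamma> (emb b)"
      then obtain d where "d < b" "\<gamma> = emb d" using lt_emb n\<gamma>(1) by blast
      thus False using sm n\<gamma>(3) by auto
    qed
    moreover have "\<gamma> \<noteq> emb b" using n\<gamma>(2) by auto
    ultimately show ?thesis using emb_trich[OF n\<gamma>(1)] by blast
  qed
  moreover have "Theta X \<gamma> \<le> b"
  proof (rule Theta_min)
    show "nf \<gamma>" "b \<in> X" "star \<gamma> < b" using n\<gamma> bX by auto
    fix z assume z: "nf z" "olt z \<gamma>" "star z < b"
    hence "(z, \<gamma>) \<in> ordrel" using n\<gamma> by (simp add: ordrel_iff)
    hence "z \<notin> G" by (rule \<gamma>min)
    thus "Theta X z < b" using z G_def by (auto simp: not_le)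
  qed
  ultimately show ?thesis using n\<gamma> by (intro exI[of _ \<gamma>]) auto
qed

lemma fix_small:
  assumes "nf g" "olt (emb b) g" "Theta X g = b"
  shows "\<forall>d<b. Theta X (emb d) < b"
proof (intro allI impI)
  fix d assume db: "d < b"
  have "Theta X (emb d) < Theta X g"
    using Theta_lt[of g "emb d"] assms emb_trans[OF db assms(2)] db by simp
  thus "Theta X (emb d) < b" using assms by simp
qed

lemma jump_limit:
  assumes lb: "climit b"
  shows "emb b \<in> JUMP X \<longleftrightarrow> (\<exists>g. nf g \<and> olt (emb b) g \<and> Theta X g = b)"
proof -
  have bnz: "b \<noteq> cz" using lb climit_def by auto
  have e: "emb b = OP OZ b OZ" by (rule emb_ne[OF bnz])
  have f: "fs (emb b) c1 = emb c1" using lb cz_c1 e by (simp add: omono_def emb_def)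
  have t: "tau (emb b) = emb b" using not_succ_emb[OF lb] lb e by simp
  have nz: "emb b \<noteq> OZ" using e by simp
  have "emb b \<in> JUMP X \<longleftrightarrow> emb b \<in> FIX X"
    unfolding JUMP_def using nz not_succ_emb[OF lb] by simp
  also have "\<dots> \<longleftrightarrow> (\<exists>g. nf g \<and> olt (emb b) g \<and> Theta X g = b)"
    unfolding FIX_def using f t limit_c1[OF lb] by simp
  finally show ?thesis .
qed

end


theorem proposition4p8:
  fixes X :: "'c::wellorder set" and \<xi> :: "'c ot"
  assumes omega1_uncountable: "\<not> countable (UNIV :: 'c set)"
    and omega1_segments: "\<forall>x::'c. countable {y. y < x}"
    and "club X" and "cz \<notin> X" and "\<xi> \<in> hat_eps X"
  shows "Theta X \<xi> \<notin> limpts X \<longleftrightarrow> (olt \<xi> OmegaT \<and> \<xi> \<in> JUMP X)"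
proof -
  interpret thx X
    by (rule thx.intro) (use assms in auto)
  have nfx: "nf \<xi>" and sx: "star \<xi> < ThetaEps X" using assms(5) by (auto simp: hat_eps_def)
  show ?thesis
  proof (cases "olt \<xi> OmegaT")
    case False
    have "Theta X \<xi> \<in> limpts X" unfolding limpts_def
    proof (intro CollectI conjI allI impI)
      show "cz < Theta X \<xi>" using Theta_star[OF nfx] cz_le[of "star \<xi>"] by (rule le_less_trans[rotated])
      fix y assume yT: "y < Theta X \<xi>"
      have "Theta X (emb y) < Theta X \<xi>"
        using Theta_lt[OF nfx, of "emb y"] big_gt[OF nfx False] yT by simp
      thus "\<exists>x\<in>X. y < x \<and> x < Theta X \<xi>"
        using Theta_X[of "emb y"] Theta_star[of "emb y"] by auto
    qed
    thus ?thesis using False by simp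
  next
    case True
    then obtain b where xb: "\<xi> = emb b" using small_emb nfx by blast
    have "b = cz \<or> (\<exists>y. b = csuc y) \<or> climit b" unfolding climit_def by blast
    moreover
    { assume b0: "b = cz"
      hence "\<xi> = OZ" using xb by simp
      hence ?thesis using zero_case True by (simp add: JUMP_def) }
    moreover
    { assume "\<exists>y. b = csuc y"
      then obtain y where yb: "b = csuc y" by blast
      have "csuc y \<noteq> cz" using cz_le[of y] csuc_gt[of y] by auto
      hence "\<xi> \<in> JUMP X" using succ_emb[of y] xb yb by (simp add: JUMP_def)
      hence ?thesis using succ_case[of y] xb yb True by simp }
    moreover
    { assume lb: "climit b"
      have eps: "b < ThetaEps X" using sx xb by simp
      have "Theta X \<xi> \<notin> limpts X \<longleftrightarrow> (\<forall>d<b. Theta X (emb d) < b)"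
        using limit_small[OF lb] limit_big[OF lb] xb by blast
      also have "\<dots> \<longleftrightarrow> (\<exists>g. nf g \<and> olt (emb b) g \<and> Theta X g = b)"
        using fix_exists[OF lb _ eps] fix_small by blast
      also have "\<dots> \<longleftrightarrow> \<xi> \<in> JUMP X" using jump_limit[OF lb] xb by simp
      finally have ?thesis using True by simp }
    ultimately show ?thesis by blast
  qed
qed

end
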